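(* Let $\{F_n\}_{n\geq 0}$ be a sequence of positive integers with $F_0=1$, let $\Pi$ be the cobweb poset it determines, and for $n\ge 0$ let $\chi_n(t)=\sum_{x\in P_n}\mu(0,x)\,t^{n-r(x)}$ be the characteristic polynomial of the finite cobweb subposet $P_n$. Then $$\chi_0(t)=1,\qquad \chi_1(t)=t-F_1,$$ and for $n\geq 2$, $$\chi_n(t)=t\,\chi_{n-1}(t)+(-1)^nF_n(F_{n-1}-1)(F_{n-2}-1)\cdots(F_1-1).$$
   Context: Cobweb poset: given the sequence $\{F_n\}_{n\ge 0}$, for $s\geq 0$ let the $s$-th level be $\Phi_s=\{\langle j,s\rangle : 1\leq j\leq F_s\}$, and let $V=\bigcup_{s\geq 0}\Phi_s$. The cobweb poset is $\Pi=(V,\leq)$ where for $x=\langle s,t\rangle$, $y=\langle u,v\rangle$ one has $x\leq y$ iff ($t<v$) or ($t=v$ and $s=u$). Its rank function is $r(x)=s$ for $x\in\Phi_s$. For $n\geq 0$, $P_n$ is the set $\bigcup_{0\leq s\leq n}\Phi_s$ with the induced order; it has unique minimal element $0=\langle 1,0\rangle$. $\mu$ denotes the M\"obius function of $P_n$. *)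

theory Defs
  imports "HOL-Computational_Algebra.Polynomial"
begin

text \<open>The recursion is made total by a fuel argument; fuel card P suffices since every
  strict chain in P has fewer than card P steps.\<close>

fun mob_aux :: "nat \<Rightarrow> 'a set \<Rightarrow> ('a \<Rightarrow> 'a \<Rightarrow> bool) \<Rightarrow> 'a \<Rightarrow> 'a \<Rightarrow> int" where
  "mob_aux 0 P le x y = 0"
| "mob_aux (Suc k) P le x y =
     (if x = y then 1
      else if le x y then - (\<Sum>z\<in>{z\<in>P. le x z \<and> le z y \<and> z \<noteq> y}. mob_aux k P le x z)
      else 0)"

definition mobius :: "'a set \<Rightarrow> ('a \<Rightarrow> 'a \<Rightarrow> bool) \<Rightarrow> 'a \<Rightarrow> 'a \<Rightarrow> int" where
  "mobius P le x y = mob_aux (card P) P le x y"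

text \<open>Cobweb poset: vertex (j, s) is the j-th element of level s, 1 <= j <= F s.\<close>

definition cobweb_le :: "nat \<times> nat \<Rightarrow> nat \<times> nat \<Rightarrow> bool" where
  "cobweb_le x y \<longleftrightarrow> snd x < snd y \<or> (snd x = snd y \<and> fst x = fst y)"

definition cobweb_rank :: "nat \<times> nat \<Rightarrow> nat" where
  "cobweb_rank x = snd x"

definition cobweb_P :: "(nat \<Rightarrow> nat) \<Rightarrow> nat \<Rightarrow> (nat \<times> nat) set" where
  "cobweb_P F n = {(j, s). s \<le> n \<and> 1 \<le> j \<and> j \<le> F s}"

definition cobweb_char_poly :: "(nat \<Rightarrow> nat) \<Rightarrow> nat \<Rightarrow> int poly" where
  "cobweb_char_poly F n =
     (\<Sum>x\<in>cobweb_P F n. smult (mobius (cobweb_P F n) cobweb_le (1, 0) x) (monom 1 (n - cobweb_rank x)))"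

end

theory Submission
  imports Defs
begin

lemma cobweb_P_0: "cobweb_P F 0 = (\<lambda>j. (j,0)) ` {1..F 0}"
  unfolding cobweb_P_def by auto

lemma cobweb_P_Suc: "cobweb_P F (Suc s) = cobweb_P F s \<union> (\<lambda>j. (j,Suc s)) ` {1..F (Suc s)}"
  unfolding cobweb_P_def by (auto simp: le_Suc_eq)

lemma cobweb_P_finite: "finite (cobweb_P F s)"
  by (induction s) (auto simp: cobweb_P_0 cobweb_P_Suc)

lemma cobweb_sum:
  fixes g :: "nat \<Rightarrow> 'b::comm_ring_1"
  shows "(\<Sum>z\<in>cobweb_P F s. g (snd z)) = (\<Sum>t\<le>s. of_nat (F t) * g t)"
proof (induction s)
  case 0
  show ?case by (simp add: cobweb_P_0 sum.reindex inj_on_def)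
next
  case (Suc s)
  have d: "cobweb_P F s \<inter> (\<lambda>j. (j,Suc s)) ` {1..F (Suc s)} = {}"
    unfolding cobweb_P_def by auto
  have "(\<Sum>z\<in>cobweb_P F (Suc s). g (snd z)) =
        (\<Sum>z\<in>cobweb_P F s. g (snd z)) + (\<Sum>z\<in>(\<lambda>j. (j,Suc s)) ` {1..F (Suc s)}. g (snd z))"
    unfolding cobweb_P_Suc by (rule sum.union_disjoint) (use d cobweb_P_finite in auto)
  also have "(\<Sum>z\<in>(\<lambda>j. (j,Suc s)) ` {1..F (Suc s)}. g (snd z)) = of_nat (F (Suc s)) * g (Suc s)"
    by (simp add: sum.reindex inj_on_def)
  finally show ?case using Suc by simp
qed

lemma cobweb_P_le: "s \<le> n \<Longrightarrow> {z\<in>cobweb_P F n. snd z \<le> s} = cobweb_P F s"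
  unfolding cobweb_P_def by auto

fun mm :: "(nat \<Rightarrow> nat) \<Rightarrow> nat \<Rightarrow> int" where
  "mm F 0 = 1"
| "mm F (Suc s) = - (\<Prod>t=1..s. 1 - int (F t))"

lemma mm_sum: "(\<Sum>t\<le>s. of_nat (F t) * mm F t) = (\<Prod>t=1..s. 1 - int (F t))" if "F 0 = 1"
proof (induction s)
  case 0 then show ?case using that by simp
next
  case (Suc s)
  have "(\<Sum>t\<le>Suc s. of_nat (F t) * mm F t) = (\<Prod>t=1..s. 1 - int (F t)) - int (F (Suc s)) * (\<Prod>t=1..s. 1 - int (F t))"
    using Suc by simp
  also have "\<dots> = (\<Prod>t=1..Suc s. 1 - int (F t))"
    by (simp add: prod.cl_ivl_Suc algebra_simps)
  finally show ?case .
qed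

lemma mob_val:
  assumes F0: "F 0 = 1"
  shows "\<And>y. y \<in> cobweb_P F n \<Longrightarrow> snd y + 1 \<le> k \<Longrightarrow>
     mob_aux k (cobweb_P F n) cobweb_le (1,0) y = mm F (snd y)"
proof (induction k)
  case 0 then show ?case by simp
next
  case (Suc k)
  show ?case
  proof (cases "snd y")
    case 0
    with Suc.prems F0 have "y = (1,0)" unfolding cobweb_P_def by (cases y) auto
    then show ?thesis by simp
  next
    case (Suc s)
    then have ne: "y \<noteq> (1,0)" by auto
    have le: "cobweb_le (1,0) y" using Suc unfolding cobweb_le_def by simp
    have sn: "Suc s \<le> n" using Suc.prems \<open>snd y = Suc s\<close> unfolding cobweb_P_def by auto
    have set: "{z\<in>cobweb_P F n. cobweb_le (1,0) z \<and> cobweb_le z y \<and> z \<noteq> y} = {z\<in>cobweb_P F n. snd z \<le> s}"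
      using Suc F0 unfolding cobweb_le_def cobweb_P_def by (cases y) auto
    have "(\<Sum>z\<in>{z\<in>cobweb_P F n. snd z \<le> s}. mob_aux k (cobweb_P F n) cobweb_le (1,0) z)
        = (\<Sum>z\<in>{z\<in>cobweb_P F n. snd z \<le> s}. mm F (snd z))"
      by (rule sum.cong) (use Suc.IH Suc.prems \<open>snd y = Suc s\<close> in auto)
    also have "\<dots> = (\<Sum>t\<le>s. of_nat (F t) * mm F t)"
      using sn by (simp add: cobweb_P_le cobweb_sum)
    also have "\<dots> = (\<Prod>t=1..s. 1 - int (F t))" using mm_sum F0 by simp
    finally show ?thesis using ne le set \<open>snd y = Suc s\<close> by simp
  qed
qed

lemma card_P: "card (cobweb_P F n) \<ge> n + 1" if "\<And>k. F k > 0"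
proof -
  have "int (card (cobweb_P F n)) = (\<Sum>z\<in>cobweb_P F n. (\<lambda>_. 1::int) (snd z))" by simp
  also have "\<dots> = (\<Sum>t\<le>n. int (F t))" by (subst cobweb_sum) simp
  also have "\<dots> \<ge> (\<Sum>t\<le>n. 1)" by (rule sum_mono) (use that in \<open>auto simp: Suc_le_eq\<close>)
  finally show ?thesis by simp
qed

lemma char_poly_eq:
  assumes "\<And>k. F k > 0" and "F 0 = 1"
  shows "cobweb_char_poly F n = (\<Sum>t\<le>n. of_nat (F t) * smult (mm F t) (monom 1 (n - t)))"
proof -
  have "cobweb_char_poly F n = (\<Sum>x\<in>cobweb_P F n. (\<lambda>t. smult (mm F t) (monom 1 (n - t))) (snd x))"
    unfolding cobweb_char_poly_def mobius_def cobweb_rank_def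
  proof (rule sum.cong)
    fix x assume x: "x \<in> cobweb_P F n"
    have "snd x \<le> n" using x unfolding cobweb_P_def by auto
    then have "snd x + 1 \<le> card (cobweb_P F n)" using card_P[of F n] assms(1) by force
    then show "smult (mob_aux (card (cobweb_P F n)) (cobweb_P F n) cobweb_le (1, 0) x) (monom 1 (n - snd x)) =
         smult (mm F (snd x)) (monom 1 (n - snd x))"
      using mob_val[OF assms(2) x] by simp
  qed simp
  also have "\<dots> = (\<Sum>t\<le>n. of_nat (F t) * smult (mm F t) (monom 1 (n - t)))"
    by (rule cobweb_sum)
  finally show ?thesis .
qed

lemma prod_neg: "(\<Prod>t=1..s. 1 - int (F t)) = (-1)^s * (\<Prod>t=1..s. int (F t) - 1)"
  by (induction s) (simp_all add: prod.cl_ivl_Suc algebra_simps)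

theorem mainTheorem4:
  fixes F :: "nat \<Rightarrow> nat"
  assumes "\<And>k. F k > 0" and "F 0 = 1"
  shows "cobweb_char_poly F 0 = 1
    \<and> cobweb_char_poly F 1 = [:- int (F 1), 1:]
    \<and> (\<forall>n\<ge>2. cobweb_char_poly F n =
           [:0, 1:] * cobweb_char_poly F (n - 1)
           + [: (-1) ^ n * int (F n) * (\<Prod>k=1..n-1. int (F k) - 1) :])"
proof (intro conjI allI impI)
  note cp = char_poly_eq[of F, OF assms]
  show "cobweb_char_poly F 0 = 1" using cp[of 0] assms(2) by simp
  show "cobweb_char_poly F 1 = [:- int (F 1), 1:]"
    using cp[of 1] assms(2) by (simp add: monom_altdef of_nat_poly)
  fix n :: nat assume "n \<ge> 2"
  then obtain n' where n: "n = Suc n'" by (cases n) auto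
  have "cobweb_char_poly F n = (\<Sum>t\<le>n'. of_nat (F t) * smult (mm F t) (monom 1 (Suc n' - t)))
      + of_nat (F n) * smult (mm F n) 1"
    using cp[of n] n by simp
  also have "(\<Sum>t\<le>n'. of_nat (F t) * smult (mm F t) (monom 1 (Suc n' - t)))
     = [:0,1:] * (\<Sum>t\<le>n'. of_nat (F t) * smult (mm F t) (monom 1 (n' - t)))"
    unfolding sum_distrib_left
    by (rule sum.cong) (auto simp: monom_altdef Suc_diff_le algebra_simps)
  also have "(\<Sum>t\<le>n'. of_nat (F t) * smult (mm F t) (monom 1 (n' - t))) = cobweb_char_poly F (n - 1)"
    using cp[of n'] n by simp
  also have "of_nat (F n) * smult (mm F n) 1 = [: (-1) ^ n * int (F n) * (\<Prod>k=1..n-1. int (F k) - 1) :]"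
    using n prod_neg[of F n'] by (simp add: of_nat_poly algebra_simps)
  finally show "cobweb_char_poly F n = [:0, 1:] * cobweb_char_poly F (n - 1)
           + [: (-1) ^ n * int (F n) * (\<Prod>k=1..n-1. int (F k) - 1) :]" .
qed

end
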